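(* Suppose $\|W_{\theta,\lambda}\|_{\mathrm{tr}}\le\rho$ for all $\theta\in\Theta$, $\lambda\in\Lambda$, and that each $k_\theta$ is stationary: $k_\theta(x,x')=\tilde k_\theta(\|x-x'\|)$ for some $\tilde k_\theta:[0,\infty)\to[0,\infty)$. For $\tilde\theta\in\Theta$ let $\Theta(\tilde\theta):=\{\theta\in\Theta: k_\theta(0,0)\le k_{\tilde\theta}(0,0)\}$ (where $k_\theta(0,0)=\tilde k_\theta(0)$). Then for any $\tilde\theta\in\Theta$ and any training observations $\{(x_i,y_i)\}_{i=1}^n$, $$\mathcal{R}_n(F_n(\Theta(\tilde\theta),\Lambda))\le 2\rho\sqrt{k_{\tilde\theta}(0,0)}.$$
   Context: MCE class setting: $\mathcal{X}\subseteq\mathbb{R}^d$, $\mathcal{Y}=\mathbb{N}_m:=\{1,\dots,m\}$, $\{k_\theta\}_{\theta\in\Theta}$ is a family of symmetric positive definite kernels on $\mathcal{X}$ with RKHS $\mathcal{H}_{k_\theta}$ and feature map $\phi_\theta(x)=k_\theta(x,\cdot)$, and $\Lambda\subseteq(0,\infty)$. Fix training observations $\{(x_i,y_i)\}_{i=1}^n\subset\mathcal{X}\times\mathbb{N}_m$; let $\mathbf{Y}\in\{0,1\}^{n\times m}$ with $\mathbf{Y}_{ic}=\mathbb{1}[y_i=c]$, $(K_\theta)_{ij}=k_\theta(x_i,x_j)$, $\mathbf{k}_\theta(x)=(k_\theta(x_i,x))_{i=1}^n$, $\Phi_\theta=[\phi_\theta(x_1)\cdots\phi_\theta(x_n)]$.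 The MCE decision function is $\mathbf{f}_{\theta,\lambda}(x):=\mathbf{Y}^T(K_\theta+n\lambda I)^{-1}\mathbf{k}_\theta(x)\in\mathbb{R}^m$, which equals $W_{\theta,\lambda}^T\phi_\theta(x)$ for $W_{\theta,\lambda}:=\Phi_\theta(K_\theta+n\lambda I)^{-1}\mathbf{Y}$; its trace norm is $\|W_{\theta,\lambda}\|_{\mathrm{tr}}=\sqrt{\mathrm{trace}(\mathbf{Y}^T(K_\theta+n\lambda I)^{-1}K_\theta(K_\theta+n\lambda I)^{-1}\mathbf{Y})}$. For $\Theta'\subseteq\Theta$, $F_n(\Theta',\Lambda):=\{\mathbf{f}_{\theta,\lambda}:\theta\in\Theta',\lambda\in\Lambda\}$. For a class $F$ of functions $\mathcal{X}\to\mathbb{R}^m$, $\mathcal{R}_n(F):=\mathbb{E}\big[\sup_{f\in F}\|\tfrac{2}{n}\sum_{i=1}^n\sigma_i f(X_i)\|\big]$, with Euclidean norm, $\sigma_i$ i.i.d. uniform on $\{-1,1\}$, and $X_i$ i.i.d. from $\mathbb{P}_X$ independent of the $\sigma_i$. *)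

theory Defs
  imports "HOL-Analysis.Analysis" "HOL-Probability.Probability"
begin

definition spd_kernel :: "'a set \<Rightarrow> ('a \<Rightarrow> 'a \<Rightarrow> real) \<Rightarrow> bool" where
  "spd_kernel X k \<longleftrightarrow>
     (\<forall>x\<in>X. \<forall>x'\<in>X. k x x' = k x' x) \<and>
     (\<forall>(xs::'a list) (c::real list). set xs \<subseteq> X \<longrightarrow> length c = length xs \<longrightarrow>
        (\<Sum>i<length xs. \<Sum>j<length xs. c!i * c!j * k (xs!i) (xs!j)) \<ge> 0)"

text \<open>Training data are indexed by a finite type 'n (so n = CARD('n)); labels by a finite
  type 'm (so m = CARD('m)).\<close>

definition label_matrix :: "('n::finite \<Rightarrow> 'm::finite) \<Rightarrow> real^'m^'n" where
  "label_matrix y = (\<chi> i c. if y i = c then 1 else 0)"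

definition gram :: "('a \<Rightarrow> 'a \<Rightarrow> real) \<Rightarrow> ('n::finite \<Rightarrow> 'a) \<Rightarrow> real^'n^'n" where
  "gram k xs = (\<chi> i j. k (xs i) (xs j))"

definition kvec :: "('a \<Rightarrow> 'a \<Rightarrow> real) \<Rightarrow> ('n::finite \<Rightarrow> 'a) \<Rightarrow> 'a \<Rightarrow> real^'n" where
  "kvec k xs x = (\<chi> i. k (xs i) x)"

definition reg_inv :: "('a \<Rightarrow> 'a \<Rightarrow> real) \<Rightarrow> ('n::finite \<Rightarrow> 'a) \<Rightarrow> real \<Rightarrow> real^'n^'n" where
  "reg_inv k xs lam = matrix_inv (gram k xs + (real CARD('n) * lam) *\<^sub>R mat 1)"

definition mce_f :: "('a \<Rightarrow> 'a \<Rightarrow> real) \<Rightarrow> ('n::finite \<Rightarrow> 'a) \<Rightarrow> ('n \<Rightarrow> 'm::finite) \<Rightarrow> real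
                    \<Rightarrow> 'a \<Rightarrow> real^'m" where
  "mce_f k xs y lam x = transpose (label_matrix y) *v (reg_inv k xs lam *v kvec k xs x)"

text \<open>Trace norm of W_{theta,lambda} as given in the paper:
  sqrt(trace(Y^T A^{-1} K A^{-1} Y)), A = K + n lambda I.\<close>
definition mce_tr_norm :: "('a \<Rightarrow> 'a \<Rightarrow> real) \<Rightarrow> ('n::finite \<Rightarrow> 'a) \<Rightarrow> ('n \<Rightarrow> 'm::finite) \<Rightarrow> real \<Rightarrow> real" where
  "mce_tr_norm k xs y lam =
     sqrt (trace (transpose (label_matrix y) ** reg_inv k xs lam ** gram k xs ** reg_inv k xs lam
                  ** label_matrix y))"

definition mce_class :: "('th \<Rightarrow> 'a \<Rightarrow> 'a \<Rightarrow> real) \<Rightarrow> ('n::finite \<Rightarrow> 'a) \<Rightarrow> ('n \<Rightarrow> 'm::finite)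
                        \<Rightarrow> 'th set \<Rightarrow> real set \<Rightarrow> ('a \<Rightarrow> real^'m) set" where
  "mce_class k xs y Th L = {mce_f (k th) xs y lam | th lam. th \<in> Th \<and> lam \<in> L}"

text \<open>Rademacher complexity R_n(F) with n = CARD('n): expectation over X_1..X_n iid from P
  and independent Rademacher signs (uniform average over {-1,1}^n), of
  sup_{f in F} || (2/n) sum_i sigma_i f(X_i) ||.  Valued in ennreal (the supremum may be infinite).\<close>
definition rademacher_complexity :: "'n::finite itself \<Rightarrow> 'a measure \<Rightarrow> ('a \<Rightarrow> real^'m) set \<Rightarrow> ennreal" where
  "rademacher_complexity _ P F =
     (\<integral>\<^sup>+ Xs. (\<Sum>\<sigma>\<in>(UNIV::'n set) \<rightarrow>\<^sub>E {-1, 1::real}.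
                   (SUP f\<in>F. ennreal (norm ((2 / real CARD('n)) *\<^sub>R (\<Sum>i\<in>UNIV. \<sigma> i *\<^sub>R f (Xs i))))))
               / 2 ^ CARD('n)
      \<partial>(PiM (UNIV::'n set) (\<lambda>_. P)))"

end

theory Submission
  imports Defs
begin

lemma psd_finite:
  assumes "spd_kernel X k" "finite I" "\<forall>i\<in>I. p i \<in> X"
  shows "0 \<le> (\<Sum>i\<in>I. \<Sum>j\<in>I. c i * c j * k (p i) (p j))"
proof -
  obtain ls where ls: "set ls = I" "distinct ls" using finite_distinct_list[OF assms(2)] by blast
  have ker: "\<forall>(xs'::_ list) (c'::real list). set xs' \<subseteq> X \<longrightarrow> length c' = length xs' \<longrightarrow>
      0 \<le> (\<Sum>i<length xs'. \<Sum>j<length xs'. c'!i * c'!j * k (xs'!i) (xs'!j))"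
    using assms(1) unfolding spd_kernel_def by blast
  have sub: "set (map p ls) \<subseteq> X" using ls(1) assms(3) by auto
  have "0 \<le> (\<Sum>i<length (map p ls). \<Sum>j<length (map p ls). map c ls!i * map c ls!j * k (map p ls!i) (map p ls!j))"
    using ker[rule_format, OF sub, of "map c ls"] by simp
  also have "\<dots> = (\<Sum>i<length ls. \<Sum>j<length ls. c (ls!i) * c (ls!j) * k (p (ls!i)) (p (ls!j)))"
    by simp
  also have "\<dots> = (\<Sum>i\<in>I. \<Sum>j\<in>I. c i * c j * k (p i) (p j))"
  proof -
    have inj: "inj_on ((!) ls) {..<length ls}" using ls(2) by (simp add: inj_on_nth)
    have im: "(!) ls ` {..<length ls} = I" using ls(1) by (auto simp: set_conv_nth)
    have re: "(\<Sum>i\<in>I. (g i :: real)) = (\<Sum>i<length ls. g (ls!i))" for g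
    proof -
      have "(\<Sum>i\<in>I. g i) = (\<Sum>i\<in>(!) ls ` {..<length ls}. g i)" using im by simp
      also have "\<dots> = (\<Sum>i<length ls. g (ls!i))" using sum.reindex[OF inj, of g] by simp
      finally show ?thesis .
    qed
    show ?thesis by (simp only: re)
  qed
  finally show ?thesis .
qed

lemma quad_disc:
  fixes a b c :: real
  assumes "\<forall>t. 0 \<le> a*t^2 + 2*b*t + c" "0 \<le> a"
  shows "b^2 \<le> a*c"
proof (cases "a = 0")
  case True
  show ?thesis
  proof (rule ccontr)
    assume "\<not> ?thesis"
    then have "b \<noteq> 0" using True by simp
    have "0 \<le> 2*b*(-(c+1)/(2*b)) + c" using assms(1) True by (metis add.left_neutral mult_zero_left)
    also have "\<dots> = -1" using \<open>b\<noteq>0\<close> by (simp add: field_simps)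
    finally show False by simp
  qed
next
  case False
  then have a: "a > 0" using assms(2) by simp
  have "0 \<le> a*(-b/a)^2 + 2*b*(-b/a) + c" using assms(1) by blast
  also have "\<dots> = (a*c - b^2)/a" using a by (simp add: field_simps power2_eq_square)
  finally show ?thesis using a by (simp add: divide_nonneg_pos zero_le_divide_iff)
qed

lemma sum_option_UNIV: "(\<Sum>i\<in>(UNIV::'a::finite option set). g i) = g None + (\<Sum>i\<in>UNIV. g (Some i))"
proof -
  have "(\<Sum>i\<in>(UNIV::'a option set). g i) = (\<Sum>i\<in>insert None (range Some). g i)"
    by (simp add: UNIV_option_conv)
  also have "\<dots> = g None + (\<Sum>i\<in>range Some. g i)" by (subst sum.insert) auto
  also have "(\<Sum>i\<in>range Some. g i) = (\<Sum>i\<in>UNIV. g (Some i))"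
    by (subst sum.reindex) (auto simp: inj_on_def)
  finally show ?thesis .
qed

lemma kernel_cs:
  fixes xs :: "'n::finite \<Rightarrow> 'a" and beta :: "'n \<Rightarrow> real"
  assumes "spd_kernel X k" "\<forall>i. xs i \<in> X" "x \<in> X" "0 \<le> k x x"
  shows "(\<Sum>j\<in>UNIV. beta j * k (xs j) x)^2 \<le> k x x * (\<Sum>i\<in>UNIV. \<Sum>j\<in>UNIV. beta i * beta j * k (xs i) (xs j))"
proof -
  let ?b = "\<Sum>j\<in>UNIV. beta j * k (xs j) x"
  let ?q = "\<Sum>i\<in>UNIV. \<Sum>j\<in>UNIV. beta i * beta j * k (xs i) (xs j)"
  have sym: "\<And>j. k x (xs j) = k (xs j) x" using assms unfolding spd_kernel_def by metis
  have "\<forall>t. 0 \<le> k x x * t^2 + 2 * ?b * t + ?q"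
  proof
    fix t :: real
    define p where "p = (\<lambda>z. case z of None \<Rightarrow> x | Some i \<Rightarrow> xs i)"
    define c where "c = (\<lambda>z. case z of None \<Rightarrow> t | Some i \<Rightarrow> beta i)"
    have "0 \<le> (\<Sum>i\<in>(UNIV::'n option set). \<Sum>j\<in>UNIV. c i * c j * k (p i) (p j))"
      by (rule psd_finite[OF assms(1)]) (auto simp: p_def assms split: option.splits)
    also have "\<dots> = k x x * t^2 + 2 * ?b * t + ?q"
      by (simp add: sum_option_UNIV p_def c_def sym sum.distrib sum_distrib_left sum_distrib_right
            power2_eq_square algebra_simps)
    finally show "0 \<le> k x x * t^2 + 2 * ?b * t + ?q" .
  qed
  then show ?thesis using quad_disc assms(4) by blast
qed

lemma reg_mat_quad:
  fixes xs :: "'n::finite \<Rightarrow> 'a" and v :: "real^'n"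
  shows "v \<bullet> ((gram k xs + s *\<^sub>R mat 1) *v v) =
     (\<Sum>i\<in>UNIV. \<Sum>j\<in>UNIV. v$i * v$j * k (xs i) (xs j)) + s * (v \<bullet> v)"
proof -
  have row: "((gram k xs + s *\<^sub>R mat 1) *v v) $ i = (\<Sum>j\<in>UNIV. k (xs i) (xs j) * v$j) + s * v$i" for i
  proof -
    have "((gram k xs + s *\<^sub>R mat 1) *v v) $ i = (\<Sum>j\<in>UNIV. (k (xs i) (xs j) + s * (if i = j then 1 else 0)) * v$j)"
      by (simp add: matrix_vector_mult_def gram_def mat_def)
    also have "\<dots> = (\<Sum>j\<in>UNIV. k (xs i) (xs j) * v$j) + (\<Sum>j\<in>UNIV. (if i = j then s * v$j else 0))"
      by (subst sum.distrib[symmetric], rule sum.cong) (auto simp: algebra_simps)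
    also have "\<dots> = (\<Sum>j\<in>UNIV. k (xs i) (xs j) * v$j) + s * v$i" by simp
    finally show ?thesis .
  qed
  have "v \<bullet> ((gram k xs + s *\<^sub>R mat 1) *v v) = (\<Sum>i\<in>UNIV. v$i * ((\<Sum>j\<in>UNIV. k (xs i) (xs j) * v$j) + s * v$i))"
    by (simp only: inner_vec_def row inner_real_def)
  also have "\<dots> = (\<Sum>i\<in>UNIV. \<Sum>j\<in>UNIV. v$i * v$j * k (xs i) (xs j)) + s * (v \<bullet> v)"
    by (simp add: inner_vec_def distrib_left sum.distrib sum_distrib_left algebra_simps)
  finally show ?thesis .
qed

lemma reg_inv_props:
  fixes xs :: "'n::finite \<Rightarrow> 'a"
  assumes "spd_kernel X k" "\<forall>i. xs i \<in> X" "lam > 0"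
  shows "transpose (reg_inv k xs lam) = reg_inv k xs lam"
proof -
  define A where "A = gram k xs + (real CARD('n) * lam) *\<^sub>R mat 1"
  define s where "s = real CARD('n) * lam"
  have s: "s > 0" using assms(3) by (simp add: s_def)
  have psd: "0 \<le> (\<Sum>i\<in>UNIV. \<Sum>j\<in>UNIV. v$i * v$j * k (xs i) (xs j))" for v :: "real^'n"
    using psd_finite[OF assms(1), of UNIV xs "\<lambda>i. v$i"] assms(2) by simp
  have ker: "\<forall>v. A *v v = 0 \<longrightarrow> v = 0"
  proof (intro allI impI)
    fix v assume "A *v v = 0"
    then have "0 = v \<bullet> (A *v v)" by simp
    also have "\<dots> = (\<Sum>i\<in>UNIV. \<Sum>j\<in>UNIV. v$i * v$j * k (xs i) (xs j)) + s * (v \<bullet> v)"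
      unfolding A_def s_def by (rule reg_mat_quad)
    finally have "s * (v \<bullet> v) \<le> 0" using psd[of v] by linarith
    then have "v \<bullet> v \<le> 0" using s by (simp add: mult_le_0_iff)
    then show "v = 0" by (metis antisym inner_ge_zero inner_eq_zero_iff)
  qed
  have inv: "invertible A" using ker invertible_left_inverse matrix_left_invertible_ker by blast
  have R: "A ** matrix_inv A = mat 1 \<and> matrix_inv A ** A = mat 1"
    using inv unfolding invertible_def matrix_inv_def by (rule someI_ex)
  have symA: "transpose A = A"
  proof -
    have "k (xs j) (xs i) = k (xs i) (xs j)" for i j using assms(1,2) unfolding spd_kernel_def by metis
    then show ?thesis unfolding A_def by (simp add: transpose_def gram_def mat_def vec_eq_iff)
  qed
  have "transpose (matrix_inv A) ** A = mat 1"
    using R by (metis matrix_transpose_mul symA transpose_mat)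
  then have "transpose (matrix_inv A) = matrix_inv A"
    by (metis R matrix_mul_assoc matrix_mul_lid matrix_mul_rid)
  then show ?thesis unfolding reg_inv_def A_def .
qed

lemma mce_pointwise:
  fixes xs :: "'n::finite \<Rightarrow> 'a" and y :: "'n \<Rightarrow> 'm::finite"
  assumes ker: "spd_kernel X k" and xsX: "\<forall>i. xs i \<in> X" and lam: "lam > 0" and x: "x \<in> X"
    and kxx: "0 \<le> k x x"
  shows "norm (mce_f k xs y lam x) \<le> mce_tr_norm k xs y lam * sqrt (k x x)
         \<and> 0 \<le> mce_tr_norm k xs y lam"
proof -
  define R where "R = reg_inv k xs lam"
  define Y where "Y = label_matrix y"
  define K where "K = gram k xs"
  define B where "B = R ** Y"
  have symR: "transpose R = R" unfolding R_def by (rule reg_inv_props[OF ker xsX lam])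
  have Rs: "R$i$j = R$j$i" for i j
    using symR by (metis transpose_def vec_lambda_beta)
  define q where "q = (\<lambda>c. \<Sum>i\<in>UNIV. \<Sum>j\<in>UNIV. B$i$c * B$j$c * k (xs i) (xs j))"
  have fc: "mce_f k xs y lam x $ c = (\<Sum>j\<in>UNIV. B$j$c * k (xs j) x)" for c
  proof -
    have "mce_f k xs y lam x $ c = (\<Sum>i\<in>UNIV. Y$i$c * (\<Sum>j\<in>UNIV. R$i$j * k (xs j) x))"
      by (simp add: mce_f_def R_def Y_def matrix_vector_mult_def transpose_def kvec_def)
    also have "\<dots> = (\<Sum>i\<in>UNIV. \<Sum>j\<in>UNIV. Y$i$c * R$j$i * k (xs j) x)"
      unfolding sum_distrib_left by (rule sum.cong[OF refl], rule sum.cong[OF refl]) (metis Rs mult.assoc)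
    also have "\<dots> = (\<Sum>j\<in>UNIV. \<Sum>i\<in>UNIV. Y$i$c * R$j$i * k (xs j) x)"
      by (rule sum.swap)
    also have "\<dots> = (\<Sum>j\<in>UNIV. (\<Sum>i\<in>UNIV. R$j$i * Y$i$c) * k (xs j) x)"
      by (simp add: sum_distrib_right sum_distrib_left algebra_simps)
    also have "\<dots> = (\<Sum>j\<in>UNIV. B$j$c * k (xs j) x)"
      by (simp add: B_def matrix_matrix_mult_def)
    finally show ?thesis .
  qed
  have tr: "mce_tr_norm k xs y lam = sqrt (\<Sum>c\<in>UNIV. q c)"
  proof -
    have M: "transpose Y ** R ** K ** R ** Y = transpose B ** K ** B"
      unfolding B_def by (simp add: matrix_transpose_mul symR matrix_mul_assoc)
    have "(transpose B ** K ** B)$c$c = q c" for c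
    proof -
      have "(transpose B ** K ** B)$c$c = (\<Sum>a\<in>UNIV. \<Sum>b\<in>UNIV. B$b$c * B$a$c * k (xs b) (xs a))"
        by (simp add: matrix_matrix_mult_def transpose_def K_def gram_def sum_distrib_left sum_distrib_right algebra_simps)
      also have "\<dots> = q c" unfolding q_def by (rule sum.swap)
      finally show ?thesis .
    qed
    then show ?thesis
      unfolding mce_tr_norm_def R_def[symmetric] Y_def[symmetric] K_def[symmetric] M
      by (simp add: trace_def)
  qed
  have qnn: "0 \<le> q c" for c
    unfolding q_def using psd_finite[OF ker, of UNIV xs "\<lambda>i. B$i$c"] xsX by simp
  have fcb: "(mce_f k xs y lam x $ c)^2 \<le> k x x * q c" for c
    unfolding fc q_def using kernel_cs[OF ker xsX x kxx, of "\<lambda>j. B$j$c"] by simp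
  have "norm (mce_f k xs y lam x) = sqrt (\<Sum>c\<in>UNIV. (mce_f k xs y lam x $ c)^2)"
    by (simp add: norm_eq_sqrt_inner inner_vec_def power2_eq_square)
  also have "\<dots> \<le> sqrt (\<Sum>c\<in>UNIV. k x x * q c)"
    by (rule real_sqrt_le_mono, rule sum_mono, rule fcb)
  also have "\<dots> = sqrt (\<Sum>c\<in>UNIV. q c) * sqrt (k x x)"
    by (simp add: sum_distrib_left[symmetric] real_sqrt_mult)
  finally show ?thesis using tr qnn by (simp add: sum_nonneg)
qed

theorem mainTheorem7:
  fixes X :: "(real^'d) set"
    and Theta :: "'th set"
    and k :: "'th \<Rightarrow> real^'d \<Rightarrow> real^'d \<Rightarrow> real"
    and kt :: "'th \<Rightarrow> real \<Rightarrow> real"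
    and Lambda :: "real set"
    and xs :: "'n::finite \<Rightarrow> real^'d"
    and y :: "'n \<Rightarrow> 'm::finite"
    and P :: "(real^'d) measure"
    and rho :: real
    and th0 :: 'th
  assumes kernels: "\<forall>th\<in>Theta. spd_kernel X (k th)"
    and Lambda_pos: "Lambda \<subseteq> {0<..}"
    and train: "\<forall>i. xs i \<in> X"
    and P_prob: "prob_space P"
    and P_space: "space P \<subseteq> X"
    and stationary: "\<forall>th\<in>Theta. (\<forall>x\<in>X. \<forall>x'\<in>X. k th x x' = kt th (norm (x - x')))
                                 \<and> (\<forall>r\<ge>0. kt th r \<ge> 0)"
    and tr_bound: "\<forall>th\<in>Theta. \<forall>lam\<in>Lambda. mce_tr_norm (k th) xs y lam \<le> rho"
    and th0: "th0 \<in> Theta"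
  shows "rademacher_complexity TYPE('n) P
           (mce_class k xs y {th \<in> Theta. kt th 0 \<le> kt th0 0} Lambda)
         \<le> ennreal (2 * rho * sqrt (kt th0 0))"
proof -
  let ?F = "mce_class k xs y {th \<in> Theta. kt th 0 \<le> kt th0 0} Lambda"
  define C where "C = rho * sqrt (kt th0 0)"
  have bound: "norm (f x) \<le> C \<and> 0 \<le> rho" if f: "f \<in> ?F" and x: "x \<in> X" for f x
  proof -
    obtain th lam where th: "th \<in> Theta" "kt th 0 \<le> kt th0 0" and lam: "lam \<in> Lambda"
      and fd: "f = mce_f (k th) xs y lam"
      using f unfolding mce_class_def by blast
    have kxx: "k th x x = kt th 0" using stationary th x by simp
    have kt0: "0 \<le> kt th 0" using stationary th by simp
    have lam0: "lam > 0" using lam Lambda_pos by auto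
    have pw: "norm (f x) \<le> mce_tr_norm (k th) xs y lam * sqrt (kt th 0)
         \<and> 0 \<le> mce_tr_norm (k th) xs y lam"
      using mce_pointwise[OF _ train lam0 x, of "k th" y] kernels th kxx kt0 fd by simp
    have T: "mce_tr_norm (k th) xs y lam \<le> rho" using tr_bound th lam by blast
    have "mce_tr_norm (k th) xs y lam * sqrt (kt th 0) \<le> rho * sqrt (kt th0 0)"
      using pw T kt0 th(2) by (intro mult_mono) auto
    then show ?thesis using pw T unfolding C_def by linarith
  qed
  have npos: "real CARD('n) > 0" by simp
  let ?S = "(UNIV::'n set) \<rightarrow>\<^sub>E {-1, 1::real}"
  have cardS: "card ?S = 2 ^ CARD('n)" by (simp add: card_PiE numeral_2_eq_2)
  have integrand: "(\<Sum>\<sigma>\<in>?S. (SUP f\<in>?F. ennreal (norm ((2 / real CARD('n)) *\<^sub>R (\<Sum>i\<in>UNIV. \<sigma> i *\<^sub>R f (Xs i))))))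
               / 2 ^ CARD('n) \<le> ennreal (2 * C)"
    if Xs: "Xs \<in> space (PiM (UNIV::'n set) (\<lambda>_. P))" for Xs
  proof -
    have XsX: "Xs i \<in> X" for i using Xs P_space by (auto simp: space_PiM)
    have one: "(SUP f\<in>?F. ennreal (norm ((2 / real CARD('n)) *\<^sub>R (\<Sum>i\<in>UNIV. \<sigma> i *\<^sub>R f (Xs i)))))
        \<le> ennreal (2 * C)" if \<sigma>: "\<sigma> \<in> ?S" for \<sigma>
    proof (rule SUP_least, rule ennreal_leI)
      fix f assume f: "f \<in> ?F"
      have s1: "\<bar>\<sigma> i\<bar> = 1" for i using \<sigma> by (auto simp: PiE_iff) (metis abs_minus_cancel abs_one)
      have "norm ((2 / real CARD('n)) *\<^sub>R (\<Sum>i\<in>UNIV. \<sigma> i *\<^sub>R f (Xs i)))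
          = (2 / real CARD('n)) * norm (\<Sum>i\<in>UNIV. \<sigma> i *\<^sub>R f (Xs i))" by simp
      also have "\<dots> \<le> (2 / real CARD('n)) * (\<Sum>i\<in>UNIV. norm (\<sigma> i *\<^sub>R f (Xs i)))"
        by (intro mult_left_mono norm_sum) simp
      also have "\<dots> = (2 / real CARD('n)) * (\<Sum>i\<in>UNIV. norm (f (Xs i)))" by (simp add: s1)
      also have "\<dots> \<le> (2 / real CARD('n)) * (\<Sum>i\<in>(UNIV::'n set). C)"
        by (intro mult_left_mono sum_mono) (auto simp: bound[OF f XsX])
      also have "\<dots> = 2 * C" using npos by simp
      finally show "norm ((2 / real CARD('n)) *\<^sub>R (\<Sum>i\<in>UNIV. \<sigma> i *\<^sub>R f (Xs i))) \<le> 2 * C" .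
    qed
    have "(\<Sum>\<sigma>\<in>?S. (SUP f\<in>?F. ennreal (norm ((2 / real CARD('n)) *\<^sub>R (\<Sum>i\<in>UNIV. \<sigma> i *\<^sub>R f (Xs i))))))
        \<le> (\<Sum>\<sigma>\<in>?S. ennreal (2 * C))" by (rule sum_mono) (rule one)
    also have "\<dots> = ennreal (2 * C) * 2 ^ CARD('n)" using cardS by (simp add: mult.commute)
    finally have "(\<Sum>\<sigma>\<in>?S. (SUP f\<in>?F. ennreal (norm ((2 / real CARD('n)) *\<^sub>R (\<Sum>i\<in>UNIV. \<sigma> i *\<^sub>R f (Xs i))))))
        / 2 ^ CARD('n) \<le> ennreal (2 * C) * 2 ^ CARD('n) / 2 ^ CARD('n)"
      by (rule divide_right_mono_ennreal)
    also have "\<dots> = ennreal (2 * C)"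
      by (rule ennreal_mult_divide_eq) (auto simp: power_eq_top_ennreal)
    finally show ?thesis .
  qed
  have ps: "prob_space (PiM (UNIV::'n set) (\<lambda>_. P))" by (rule prob_space_PiM) (simp add: P_prob)
  have "rademacher_complexity TYPE('n) P ?F \<le> (\<integral>\<^sup>+ Xs. ennreal (2 * C) \<partial>(PiM (UNIV::'n set) (\<lambda>_. P)))"
    unfolding rademacher_complexity_def by (rule nn_integral_mono) (rule integrand)
  also have "\<dots> = ennreal (2 * C)" using prob_space.emeasure_space_1[OF ps] by simp
  finally show ?thesis unfolding C_def by (simp add: mult.assoc)
qed

end
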